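(* Let $R$ be the right shift on $\ell^2_{\mathbb{H}}(\mathbb{Z})$ defined by $R(x)=y$ with $y_i=x_{i+1}$ for $i\neq-1$ and $y_{-1}=0$. Then $\partial\sigma_S(R)$ is properly contained in $B_{S,\partial}(R)$.
   Context: $\mathbb{H}$ denotes the quaternions, $Re(q)$ the real part and $|q|$ the norm. $\ell^2_{\mathbb{H}}(\mathbb{Z})=\{x:\mathbb{Z}\to\mathbb{H}:\sum_i|x_i|^2<\infty\}$ is a right quaternionic Hilbert space with $xa=(x_ia)_i$ and $\langle x,y\rangle=\sum_i\overline{x_i}y_i$, equipped with the left multiplication induced by the standard Hilbert basis, i.e. $qx=(qx_i)_i$. $\mathcal{B}=\mathcal{B}(\ell^2_{\mathbb{H}}(\mathbb{Z}))$ (bounded right linear operators with $(qT)x=q(Tx)$, $(Tq)x=T(qx)$, composition, operator norm) is a quaternionic two-sided Banach algebra with unit $\mathbb{I}$, with invertible group $\mathcal{B}^{-1}$. For $T\in\mathcal{B}$, $R_q(T)=T^2-2Re(q)T+|q|^2\mathbb{I}$; $\sigma_S(T)=\{q\in\mathbb{H}:R_q(T)\notin\mathcal{B}^{-1}\}$ with boundary $\partial\sigma_S(T)$ in $\mathbb{H}$; the boundary S-spectrum is $B_{S,\partial}(T)=\{q\in\mathbb{H}:R_q(T)\in\partial(\mathcal{B}\setminus\mathcal{B}^{-1})\}$, where $\partial$ is the topological boundary in $\mathcal{B}$ for the operator norm. *)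

theory Defs
  imports "HOL-Analysis.Analysis"
begin

section \<open>Quaternions, modelled as real^4 (components 1,2,3,4 = real part, i, j, k)\<close>

type_synonym quat = "real ^ 4"

text \<open>The Euclidean norm on real^4 is the quaternionic norm |q|, and the topology
of real^4 is the standard topology of the quaternions.\<close>

definition qRe :: "quat \<Rightarrow> real" where
  "qRe q = q $ 1"

definition qmult :: "quat \<Rightarrow> quat \<Rightarrow> quat" where
  "qmult p q = (\<chi> n. if n = 1 then p$1*q$1 - p$2*q$2 - p$3*q$3 - p$4*q$4
                  else if n = 2 then p$1*q$2 + p$2*q$1 + p$3*q$4 - p$4*q$3
                  else if n = 3 then p$1*q$3 - p$2*q$4 + p$3*q$1 + p$4*q$2
                  else p$1*q$4 + p$2*q$3 - p$3*q$2 + p$4*q$1)"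

definition l2H :: "(int \<Rightarrow> quat) set" where
  "l2H = {x. (\<lambda>i. (norm (x i))\<^sup>2) summable_on UNIV}"

definition l2norm :: "(int \<Rightarrow> quat) \<Rightarrow> real" where
  "l2norm x = sqrt (infsum (\<lambda>i. (norm (x i))\<^sup>2) UNIV)"

definition rscal :: "(int \<Rightarrow> quat) \<Rightarrow> quat \<Rightarrow> (int \<Rightarrow> quat)" where
  "rscal x a = (\<lambda>i. qmult (x i) a)"

text \<open>Operators are represented as functions on int => quat which vanish outside l2H
(so that an operator is determined by its action on l2H).\<close>

definition Bops :: "((int \<Rightarrow> quat) \<Rightarrow> (int \<Rightarrow> quat)) set" where
  "Bops = {T. (\<forall>x\<in>l2H. T x \<in> l2H)
            \<and> (\<forall>x\<in>l2H. \<forall>y\<in>l2H. T (\<lambda>i. x i + y i) = (\<lambda>i. T x i + T y i))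
            \<and> (\<forall>x\<in>l2H. \<forall>a. T (rscal x a) = rscal (T x) a)
            \<and> (\<exists>C. \<forall>x\<in>l2H. l2norm (T x) \<le> C * l2norm x)
            \<and> (\<forall>x. x \<notin> l2H \<longrightarrow> T x = (\<lambda>i. 0))}"

definition Iop :: "(int \<Rightarrow> quat) \<Rightarrow> (int \<Rightarrow> quat)" where
  "Iop x = (if x \<in> l2H then x else (\<lambda>i. 0))"

definition opnorm :: "((int \<Rightarrow> quat) \<Rightarrow> (int \<Rightarrow> quat)) \<Rightarrow> real" where
  "opnorm T = Sup {l2norm (T x) | x. x \<in> l2H \<and> l2norm x \<le> 1}"

definition opdist :: "((int \<Rightarrow> quat) \<Rightarrow> (int \<Rightarrow> quat)) \<Rightarrow> ((int \<Rightarrow> quat) \<Rightarrow> (int \<Rightarrow> quat)) \<Rightarrow> real" where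
  "opdist S T = opnorm (\<lambda>x i. S x i - T x i)"

definition Binv :: "((int \<Rightarrow> quat) \<Rightarrow> (int \<Rightarrow> quat)) set" where
  "Binv = {T \<in> Bops. \<exists>S\<in>Bops. S \<circ> T = Iop \<and> T \<circ> S = Iop}"

definition Bfrontier :: "((int \<Rightarrow> quat) \<Rightarrow> (int \<Rightarrow> quat)) set \<Rightarrow> ((int \<Rightarrow> quat) \<Rightarrow> (int \<Rightarrow> quat)) set" where
  "Bfrontier A = {T \<in> Bops. \<forall>e>0. (\<exists>S\<in>Bops \<inter> A. opdist S T < e) \<and> (\<exists>S\<in>Bops - A. opdist S T < e)}"

definition Rq :: "quat \<Rightarrow> ((int \<Rightarrow> quat) \<Rightarrow> (int \<Rightarrow> quat)) \<Rightarrow> ((int \<Rightarrow> quat) \<Rightarrow> (int \<Rightarrow> quat))" where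
  "Rq q T = (\<lambda>x. if x \<in> l2H then (\<lambda>i. T (T x) i - (2 * qRe q) *\<^sub>R T x i + (norm q)\<^sup>2 *\<^sub>R x i)
                 else (\<lambda>i. 0))"

definition S_spectrum :: "((int \<Rightarrow> quat) \<Rightarrow> (int \<Rightarrow> quat)) \<Rightarrow> quat set" where
  "S_spectrum T = {q. Rq q T \<notin> Binv}"

definition boundary_S_spectrum :: "((int \<Rightarrow> quat) \<Rightarrow> (int \<Rightarrow> quat)) \<Rightarrow> quat set" where
  "boundary_S_spectrum T = {q. Rq q T \<in> Bfrontier (Bops - Binv)}"

definition Rshift :: "(int \<Rightarrow> quat) \<Rightarrow> (int \<Rightarrow> quat)" where
  "Rshift x = (if x \<in> l2H then (\<lambda>i. if i = -1 then 0 else x (i + 1)) else (\<lambda>i. 0))"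

end

theory Submission
  imports Defs
begin

lemma qnorm_sq: "(norm (q::quat))\<^sup>2 = (q$1)\<^sup>2 + (q$2)\<^sup>2 + (q$3)\<^sup>2 + (q$4)\<^sup>2"
  unfolding norm_vec_def L2_set_def by (simp add: sum_4 sum_nonneg)

lemma qmult_comp:
  "qmult p q $ 1 = p$1*q$1 - p$2*q$2 - p$3*q$3 - p$4*q$4"
  "qmult p q $ 2 = p$1*q$2 + p$2*q$1 + p$3*q$4 - p$4*q$3"
  "qmult p q $ 3 = p$1*q$3 - p$2*q$4 + p$3*q$1 + p$4*q$2"
  "qmult p q $ 4 = p$1*q$4 + p$2*q$3 - p$3*q$2 + p$4*q$1"
  by (simp_all add: qmult_def)

lemma vec4_eqI:
  assumes "(x::quat)$1 = y$1" "x$2 = y$2" "x$3 = y$3" "x$4 = y$4" shows "x = y"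
proof (subst vec_eq_iff, intro allI)
  fix i :: 4
  show "x $ i = y $ i" using exhaust_4[of i] assms by auto
qed

lemma qmult_add_left: "qmult (u + v) a = qmult u a + qmult v a"
  by (rule vec4_eqI) (simp_all add: qmult_comp algebra_simps)
lemma qmult_diff_left: "qmult (u - v) a = qmult u a - qmult v a"
  by (rule vec4_eqI) (simp_all add: qmult_comp algebra_simps)
lemma qmult_scaleR_left: "qmult (c *\<^sub>R u) a = c *\<^sub>R qmult u a"
  by (rule vec4_eqI) (simp_all add: qmult_comp algebra_simps)
lemma qmult_zero_left: "qmult 0 a = 0"
  by (rule vec4_eqI) (simp_all add: qmult_comp)

lemma qmult_norm: "norm (qmult p a) = norm p * norm a"
proof -
  have "(norm (qmult p a))\<^sup>2 = (norm p * norm a)\<^sup>2"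
    unfolding power_mult_distrib qnorm_sq qmult_comp by algebra
  then show ?thesis by (simp add: power2_eq_iff_nonneg)
qed

lemma qmult_char: "qmult q (qmult q y) - (2 * qRe q) *\<^sub>R qmult q y + (norm q)\<^sup>2 *\<^sub>R y = 0"
  unfolding qnorm_sq by (rule vec4_eqI) (simp_all add: qmult_comp qRe_def, algebra+)

definition N2 :: "(int \<Rightarrow> quat) \<Rightarrow> real" where
  "N2 x = infsum (\<lambda>i. (norm (x i))\<^sup>2) UNIV"

lemma l2norm_N2: "l2norm x = sqrt (N2 x)"
  by (simp add: l2norm_def N2_def)

lemma N2_nonneg: "N2 x \<ge> 0"
  unfolding N2_def by (rule infsum_nonneg) simp

lemma l2H_sum: "x \<in> l2H \<Longrightarrow> (\<lambda>i. (norm (x i))\<^sup>2) summable_on UNIV"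
  by (simp add: l2H_def)

lemma zero_l2H: "(\<lambda>i. 0) \<in> l2H"
  by (simp add: l2H_def)

lemma N2_zero: "N2 (\<lambda>i. 0) = 0"
  by (simp add: N2_def)

lemma comb2:
  assumes u: "u \<in> l2H" and v: "v \<in> l2H" and A: "A \<ge> 0" and B: "B \<ge> 0"
    and le: "\<And>i. (norm (y i))\<^sup>2 \<le> A * (norm (u i))\<^sup>2 + B * (norm (v i))\<^sup>2"
  shows "y \<in> l2H \<and> N2 y \<le> A * N2 u + B * N2 v"
proof -
  have su: "(\<lambda>i. A * (norm (u i))\<^sup>2) summable_on UNIV"
    using l2H_sum[OF u] by (rule summable_on_cmult_right)
  have sv: "(\<lambda>i. B * (norm (v i))\<^sup>2) summable_on UNIV"
    using l2H_sum[OF v] by (rule summable_on_cmult_right)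
  have s: "(\<lambda>i. A * (norm (u i))\<^sup>2 + B * (norm (v i))\<^sup>2) summable_on UNIV"
    using su sv by (rule summable_on_add)
  have sy: "(\<lambda>i. (norm (y i))\<^sup>2) summable_on UNIV"
    by (rule summable_on_comparison_test[OF s]) (use le in auto)
  have "N2 y \<le> infsum (\<lambda>i. A * (norm (u i))\<^sup>2 + B * (norm (v i))\<^sup>2) UNIV"
    unfolding N2_def by (rule infsum_mono[OF sy s le])
  also have "\<dots> = A * N2 u + B * N2 v"
    unfolding N2_def infsum_add[OF su sv]
    using infsum_cmult_right[OF l2H_sum[OF u], of A] infsum_cmult_right[OF l2H_sum[OF v], of B]
    by simp
  finally show ?thesis using sy by (simp add: l2H_def)
qed

lemma comb3:
  assumes u: "u \<in> l2H" and v: "v \<in> l2H" and w: "w \<in> l2H" and A: "A \<ge> 0" and B: "B \<ge> 0" and C: "C \<ge> 0"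
    and le: "\<And>i. (norm (y i))\<^sup>2 \<le> A * (norm (u i))\<^sup>2 + B * (norm (v i))\<^sup>2 + C * (norm (w i))\<^sup>2"
  shows "y \<in> l2H \<and> N2 y \<le> A * N2 u + B * N2 v + C * N2 w"
proof -
  have su: "(\<lambda>i. A * (norm (u i))\<^sup>2) summable_on UNIV"
    using l2H_sum[OF u] by (rule summable_on_cmult_right)
  have sv: "(\<lambda>i. B * (norm (v i))\<^sup>2) summable_on UNIV"
    using l2H_sum[OF v] by (rule summable_on_cmult_right)
  have sw: "(\<lambda>i. C * (norm (w i))\<^sup>2) summable_on UNIV"
    using l2H_sum[OF w] by (rule summable_on_cmult_right)
  have s2: "(\<lambda>i. A * (norm (u i))\<^sup>2 + B * (norm (v i))\<^sup>2) summable_on UNIV"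
    using su sv by (rule summable_on_add)
  have s: "(\<lambda>i. A * (norm (u i))\<^sup>2 + B * (norm (v i))\<^sup>2 + C * (norm (w i))\<^sup>2) summable_on UNIV"
    using s2 sw by (rule summable_on_add)
  have sy: "(\<lambda>i. (norm (y i))\<^sup>2) summable_on UNIV"
    by (rule summable_on_comparison_test[OF s]) (use le in auto)
  have "N2 y \<le> infsum (\<lambda>i. A * (norm (u i))\<^sup>2 + B * (norm (v i))\<^sup>2 + C * (norm (w i))\<^sup>2) UNIV"
    unfolding N2_def by (rule infsum_mono[OF sy s le])
  also have "\<dots> = A * N2 u + B * N2 v + C * N2 w"
    unfolding N2_def infsum_add[OF s2 sw] infsum_add[OF su sv]
    using infsum_cmult_right[OF l2H_sum[OF u], of A] infsum_cmult_right[OF l2H_sum[OF v], of B]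
      infsum_cmult_right[OF l2H_sum[OF w], of C]
    by simp
  finally show ?thesis using sy by (simp add: l2H_def)
qed

lemma real_sq2: "((u::real) + v)\<^sup>2 \<le> 2 * u\<^sup>2 + 2 * v\<^sup>2"
proof -
  have e: "(u + v)\<^sup>2 = 2 * u\<^sup>2 + 2 * v\<^sup>2 - (u - v)\<^sup>2" by (simp add: power2_eq_square algebra_simps)
  have "0 \<le> (u - v)\<^sup>2" by simp
  then show ?thesis unfolding e by linarith
qed

lemma real_sq3: "((u::real) + v + w)\<^sup>2 \<le> 3 * u\<^sup>2 + 3 * v\<^sup>2 + 3 * w\<^sup>2"
proof -
  have e: "(u + v + w)\<^sup>2 = 3 * u\<^sup>2 + 3 * v\<^sup>2 + 3 * w\<^sup>2 - ((u - v)\<^sup>2 + (u - w)\<^sup>2 + (v - w)\<^sup>2)"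
    by (simp add: power2_eq_square algebra_simps)
  have "0 \<le> (u - v)\<^sup>2 + (u - w)\<^sup>2 + (v - w)\<^sup>2" by simp
  then show ?thesis unfolding e by linarith
qed

lemma sq_add_le: "(norm ((a::quat) + b))\<^sup>2 \<le> 2 * (norm a)\<^sup>2 + 2 * (norm b)\<^sup>2"
proof -
  have "norm (a + b) \<le> norm a + norm b" by (rule norm_triangle_ineq)
  then have "(norm (a + b))\<^sup>2 \<le> (norm a + norm b)\<^sup>2" by (rule power_mono) simp
  also have "\<dots> \<le> 2 * (norm a)\<^sup>2 + 2 * (norm b)\<^sup>2" by (rule real_sq2)
  finally show ?thesis .
qed

lemma sq_add3_le: "(norm ((a::quat) + b + c))\<^sup>2 \<le> 3 * (norm a)\<^sup>2 + 3 * (norm b)\<^sup>2 + 3 * (norm c)\<^sup>2"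
proof -
  have "norm (a + b + c) \<le> norm a + norm b + norm c"
    using norm_triangle_ineq[of "a+b" c] norm_triangle_ineq[of a b] by linarith
  then have "(norm (a + b + c))\<^sup>2 \<le> (norm a + norm b + norm c)\<^sup>2" by (rule power_mono) simp
  also have "\<dots> \<le> 3 * (norm a)\<^sup>2 + 3 * (norm b)\<^sup>2 + 3 * (norm c)\<^sup>2" by (rule real_sq3)
  finally show ?thesis .
qed

lemma N2_le_imp_l2norm:
  assumes C: "C \<ge> 0" and h: "N2 y \<le> C\<^sup>2 * N2 x"
  shows "l2norm y \<le> C * l2norm x"
proof -
  have "sqrt (N2 y) \<le> sqrt (C\<^sup>2 * N2 x)" using h by (rule real_sqrt_le_mono)
  also have "\<dots> = C * sqrt (N2 x)" using C by (simp add: real_sqrt_mult)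
  finally show ?thesis by (simp add: l2norm_N2)
qed

lemma l2norm_imp_N2: "C \<ge> 0 \<Longrightarrow> l2norm y \<le> C * l2norm x \<Longrightarrow> N2 y \<le> C\<^sup>2 * N2 x"
proof -
  assume C: "C \<ge> 0" and h: "l2norm y \<le> C * l2norm x"
  have "(l2norm y)\<^sup>2 \<le> (C * l2norm x)\<^sup>2"
    using h by (intro power_mono) (auto simp: l2norm_N2 N2_nonneg)
  then show ?thesis by (simp add: l2norm_N2 N2_nonneg power_mult_distrib)
qed

lemma opnorm_le:
  assumes "\<And>x. x \<in> l2H \<Longrightarrow> l2norm x \<le> 1 \<Longrightarrow> l2norm (D x) \<le> B"
  shows "opnorm D \<le> B"
  unfolding opnorm_def
proof (rule cSup_least)
  show "{l2norm (D x) |x. x \<in> l2H \<and> l2norm x \<le> 1} \<noteq> {}"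
    using zero_l2H by (auto simp: l2norm_N2 N2_zero)
qed (use assms in auto)

lemma rscal_l2H: "x \<in> l2H \<Longrightarrow> rscal x a \<in> l2H"
  using comb2[of x x "(norm a)\<^sup>2" 0 "rscal x a"]
  by (simp add: rscal_def qmult_norm power_mult_distrib)

definition wop :: "(int \<Rightarrow> int) \<Rightarrow> (int \<Rightarrow> real) \<Rightarrow> (int \<Rightarrow> quat) \<Rightarrow> (int \<Rightarrow> quat)" where
  "wop \<sigma> c = (\<lambda>x. if x \<in> l2H then (\<lambda>i. c i *\<^sub>R x (\<sigma> i)) else (\<lambda>i. 0))"

lemma reindex_l2:
  assumes inj: "inj \<sigma>" and x: "x \<in> l2H"
  shows "(\<lambda>i. (norm (x (\<sigma> i)))\<^sup>2) summable_on UNIV \<and> infsum (\<lambda>i. (norm (x (\<sigma> i)))\<^sup>2) UNIV \<le> N2 x"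
proof -
  let ?g = "\<lambda>i. (norm (x i))\<^sup>2"
  have g: "?g summable_on UNIV" using l2H_sum[OF x] .
  have gr: "?g summable_on range \<sigma>" by (rule summable_on_subset_banach[OF g]) auto
  have s: "(?g \<circ> \<sigma>) summable_on UNIV" using gr summable_on_reindex[of \<sigma> UNIV ?g] inj by simp
  have "infsum (?g \<circ> \<sigma>) UNIV = infsum ?g (range \<sigma>)" using infsum_reindex[of \<sigma> UNIV ?g] inj by simp
  also have "\<dots> \<le> infsum ?g UNIV"
    by (rule infsum_mono_neutral[OF gr g]) auto
  finally show ?thesis using s by (simp add: o_def N2_def)
qed

lemma wop_l2:
  assumes inj: "inj \<sigma>" and M: "\<And>i. \<bar>c i\<bar> \<le> M" and x: "x \<in> l2H"
  shows "wop \<sigma> c x \<in> l2H \<and> N2 (wop \<sigma> c x) \<le> M\<^sup>2 * N2 x"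
proof -
  let ?h = "\<lambda>i. (norm (x (\<sigma> i)))\<^sup>2"
  obtain hs: "?h summable_on UNIV" and hle: "infsum ?h UNIV \<le> N2 x" using reindex_l2[OF inj x] by blast
  have hs2: "(\<lambda>i. M\<^sup>2 * ?h i) summable_on UNIV" using hs by (rule summable_on_cmult_right)
  have le: "(norm (c i *\<^sub>R x (\<sigma> i)))\<^sup>2 \<le> M\<^sup>2 * ?h i" for i
  proof -
    have "\<bar>c i\<bar>\<^sup>2 \<le> M\<^sup>2" by (rule power_mono[OF M abs_ge_zero])
    then have "(c i)\<^sup>2 \<le> M\<^sup>2" by simp
    then show ?thesis by (simp add: power_mult_distrib mult_right_mono)
  qed
  have sy: "(\<lambda>i. (norm (c i *\<^sub>R x (\<sigma> i)))\<^sup>2) summable_on UNIV"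
    by (rule summable_on_comparison_test[OF hs2]) (use le in auto)
  have w: "wop \<sigma> c x = (\<lambda>i. c i *\<^sub>R x (\<sigma> i))" using x by (simp add: wop_def)
  have "N2 (wop \<sigma> c x) = infsum (\<lambda>i. (norm (c i *\<^sub>R x (\<sigma> i)))\<^sup>2) UNIV"
    unfolding w N2_def ..
  also have "\<dots> \<le> infsum (\<lambda>i. M\<^sup>2 * ?h i) UNIV" by (rule infsum_mono[OF sy hs2 le])
  also have "\<dots> = M\<^sup>2 * infsum ?h UNIV" by (rule infsum_cmult_right[OF hs])
  also have "\<dots> \<le> M\<^sup>2 * N2 x" using hle by (simp add: mult_left_mono)
  finally have "N2 (wop \<sigma> c x) \<le> M\<^sup>2 * N2 x" .
  moreover have "wop \<sigma> c x \<in> l2H" unfolding w l2H_def using sy by simp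
  ultimately show ?thesis by blast
qed

lemma BopsI:
  assumes "\<And>x. x \<in> l2H \<Longrightarrow> T x \<in> l2H"
    and "\<And>x y. x \<in> l2H \<Longrightarrow> y \<in> l2H \<Longrightarrow> T (\<lambda>i. x i + y i) = (\<lambda>i. T x i + T y i)"
    and "\<And>x a. x \<in> l2H \<Longrightarrow> T (rscal x a) = rscal (T x) a"
    and "K \<ge> 0" and "\<And>x. x \<in> l2H \<Longrightarrow> N2 (T x) \<le> K * N2 x"
    and "\<And>x. x \<notin> l2H \<Longrightarrow> T x = (\<lambda>i. 0)"
  shows "T \<in> Bops"
proof -
  have "\<forall>x\<in>l2H. l2norm (T x) \<le> sqrt K * l2norm x"
    using assms(4,5) by (intro ballI N2_le_imp_l2norm) auto
  then have b: "\<exists>C. \<forall>x\<in>l2H. l2norm (T x) \<le> C * l2norm x" by blast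
  show ?thesis unfolding Bops_def mem_Collect_eq
  proof (intro conjI)
    show "\<forall>x\<in>l2H. T x \<in> l2H" using assms(1) by blast
    show "\<forall>x\<in>l2H. \<forall>y\<in>l2H. T (\<lambda>i. x i + y i) = (\<lambda>i. T x i + T y i)" using assms(2) by blast
    show "\<forall>x\<in>l2H. \<forall>a. T (rscal x a) = rscal (T x) a" using assms(3) by blast
    show "\<forall>x. x \<notin> l2H \<longrightarrow> T x = (\<lambda>i. 0)" using assms(6) by blast
  qed (rule b)
qed

lemma BopsE: "T \<in> Bops \<Longrightarrow> (\<forall>x\<in>l2H. T x \<in> l2H)
            \<and> (\<forall>x\<in>l2H. \<forall>y\<in>l2H. T (\<lambda>i. x i + y i) = (\<lambda>i. T x i + T y i))
            \<and> (\<forall>x\<in>l2H. \<forall>a. T (rscal x a) = rscal (T x) a)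
            \<and> (\<exists>C. \<forall>x\<in>l2H. l2norm (T x) \<le> C * l2norm x)
            \<and> (\<forall>x. x \<notin> l2H \<longrightarrow> T x = (\<lambda>i. 0))"
  unfolding Bops_def mem_Collect_eq by assumption

lemma BopsD1: "T \<in> Bops \<Longrightarrow> x \<in> l2H \<Longrightarrow> T x \<in> l2H"
  by (drule BopsE, erule conjE, erule bspec)
lemma BopsD2: "T \<in> Bops \<Longrightarrow> x \<in> l2H \<Longrightarrow> y \<in> l2H \<Longrightarrow> T (\<lambda>i. x i + y i) = (\<lambda>i. T x i + T y i)"
proof -
  assume "T \<in> Bops" "x \<in> l2H" "y \<in> l2H"
  then have "\<forall>x\<in>l2H. \<forall>y\<in>l2H. T (\<lambda>i. x i + y i) = (\<lambda>i. T x i + T y i)" using BopsE by blast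
  then show ?thesis using \<open>x \<in> l2H\<close> \<open>y \<in> l2H\<close> by blast
qed
lemma BopsD3: "T \<in> Bops \<Longrightarrow> x \<in> l2H \<Longrightarrow> T (rscal x a) = rscal (T x) a"
proof -
  assume "T \<in> Bops" "x \<in> l2H"
  then have "\<forall>x\<in>l2H. \<forall>a. T (rscal x a) = rscal (T x) a" using BopsE by blast
  then show ?thesis using \<open>x \<in> l2H\<close> by blast
qed
lemma BopsD5: "T \<in> Bops \<Longrightarrow> x \<notin> l2H \<Longrightarrow> T x = (\<lambda>i. 0)"
proof -
  assume "T \<in> Bops" "x \<notin> l2H"
  then have "\<forall>x. x \<notin> l2H \<longrightarrow> T x = (\<lambda>i. 0)" using BopsE by blast
  then show ?thesis using \<open>x \<notin> l2H\<close> by blast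
qed
lemma BopsD4:
  assumes "T \<in> Bops"
  shows "\<exists>K\<ge>0. \<forall>x\<in>l2H. N2 (T x) \<le> K * N2 x"
proof -
  have "\<exists>C. \<forall>x\<in>l2H. l2norm (T x) \<le> C * l2norm x" using BopsE[OF assms] by blast
  then obtain C where C: "\<forall>x\<in>l2H. l2norm (T x) \<le> C * l2norm x" by blast
  have "\<forall>x\<in>l2H. N2 (T x) \<le> (\<bar>C\<bar>)\<^sup>2 * N2 x"
  proof
    fix x assume x: "x \<in> l2H"
    have "C * l2norm x \<le> \<bar>C\<bar> * l2norm x"
      by (intro mult_right_mono) (auto simp: l2norm_N2 N2_nonneg)
    then have "l2norm (T x) \<le> \<bar>C\<bar> * l2norm x"
      using C x by auto
    then show "N2 (T x) \<le> (\<bar>C\<bar>)\<^sup>2 * N2 x" by (intro l2norm_imp_N2) auto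
  qed
  then show ?thesis by (intro exI[of _ "(\<bar>C\<bar>)\<^sup>2"]) auto
qed

lemma add_l2H: "x \<in> l2H \<Longrightarrow> y \<in> l2H \<Longrightarrow> (\<lambda>i. x i + y i) \<in> l2H"
  using comb2[of x y 2 2 "\<lambda>i. x i + y i"] sq_add_le by auto

lemma wop_eq: "x \<in> l2H \<Longrightarrow> wop \<sigma> c x = (\<lambda>i. c i *\<^sub>R x (\<sigma> i))"
  unfolding wop_def by (rule if_P)

lemma wop_out: "x \<notin> l2H \<Longrightarrow> wop \<sigma> c x = (\<lambda>i. 0)"
  unfolding wop_def by (rule if_not_P)

lemma wop_Bops:
  assumes inj: "inj \<sigma>" and M: "\<And>i. \<bar>c i\<bar> \<le> M"
  shows "wop \<sigma> c \<in> Bops"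
proof (rule BopsI[of _ "M\<^sup>2"])
  show "x \<in> l2H \<Longrightarrow> wop \<sigma> c x \<in> l2H" for x by (rule conjunct1[OF wop_l2[OF inj M]])
  show "x \<in> l2H \<Longrightarrow> N2 (wop \<sigma> c x) \<le> M\<^sup>2 * N2 x" for x by (rule conjunct2[OF wop_l2[OF inj M]])
  show "wop \<sigma> c (\<lambda>i. x i + y i) = (\<lambda>i. wop \<sigma> c x i + wop \<sigma> c y i)" if x: "x \<in> l2H" and y: "y \<in> l2H" for x y
    unfolding wop_eq[OF add_l2H[OF x y]] wop_eq[OF x] wop_eq[OF y]
    by (rule ext) (simp only: scaleR_add_right)
  show "wop \<sigma> c (rscal x a) = rscal (wop \<sigma> c x) a" if x: "x \<in> l2H" for x a
    unfolding wop_eq[OF rscal_l2H[OF x]] wop_eq[OF x]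
    by (rule ext) (simp only: rscal_def qmult_scaleR_left)
  show "x \<notin> l2H \<Longrightarrow> wop \<sigma> c x = (\<lambda>i. 0)" for x by (rule wop_out)
  show "0 \<le> M\<^sup>2" by (rule zero_le_power2)
qed

lemma wop_inverse:
  assumes l2: "\<And>x. x \<in> l2H \<Longrightarrow> wop \<sigma> c x \<in> l2H"
    and st: "\<And>j. \<sigma> (\<tau> j) = j" and cd: "\<And>j. d j * c (\<tau> j) = 1"
  shows "wop \<tau> d \<circ> wop \<sigma> c = Iop"
proof
  fix x
  show "(wop \<tau> d \<circ> wop \<sigma> c) x = Iop x"
  proof (cases "x \<in> l2H")
    case True
    have w: "wop \<sigma> c x = (\<lambda>i. c i *\<^sub>R x (\<sigma> i))" using True by (simp add: wop_def)
    have "wop \<tau> d (wop \<sigma> c x) = (\<lambda>j. d j *\<^sub>R (c (\<tau> j) *\<^sub>R x (\<sigma> (\<tau> j))))"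
      using l2[OF True] unfolding w by (simp add: wop_def)
    then show ?thesis by (simp add: Iop_def True st cd)
  next
    case False
    have "wop \<sigma> c x = (\<lambda>i. 0)" using False by (simp add: wop_def)
    then show ?thesis using zero_l2H False by (simp add: wop_def Iop_def)
  qed
qed

lemma Rq_eq: "x \<in> l2H \<Longrightarrow> Rq q T x = (\<lambda>i. T (T x) i - (2 * qRe q) *\<^sub>R T x i + (norm q)\<^sup>2 *\<^sub>R x i)"
  by (simp add: Rq_def)

lemma Rq_Bops:
  assumes T: "T \<in> Bops"
  shows "Rq q T \<in> Bops"
proof -
  obtain K where K: "K \<ge> 0" "\<And>x. x \<in> l2H \<Longrightarrow> N2 (T x) \<le> K * N2 x" using BopsD4[OF T] by blast
  define a where "a = 2 * qRe q"
  define b where "b = (norm q)\<^sup>2"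
  have R: "x \<in> l2H \<Longrightarrow> Rq q T x = (\<lambda>i. T (T x) i - a *\<^sub>R T x i + b *\<^sub>R x i)" for x
    by (simp add: Rq_eq a_def b_def)
  have main: "Rq q T x \<in> l2H \<and> N2 (Rq q T x) \<le> (3 * K\<^sup>2 + 3 * a\<^sup>2 * K + 3 * b\<^sup>2) * N2 x" if x: "x \<in> l2H" for x
  proof -
    have tx: "T x \<in> l2H" using BopsD1[OF T x] .
    have ttx: "T (T x) \<in> l2H" using BopsD1[OF T tx] .
    have pw: "(norm (Rq q T x i))\<^sup>2 \<le> 3 * (norm (T (T x) i))\<^sup>2 + (3 * a\<^sup>2) * (norm (T x i))\<^sup>2 + (3 * b\<^sup>2) * (norm (x i))\<^sup>2" for i
    proof -
      have "Rq q T x i = T (T x) i + (- (a *\<^sub>R T x i)) + b *\<^sub>R x i" using R[OF x] by simp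
      then have "(norm (Rq q T x i))\<^sup>2 \<le> 3 * (norm (T (T x) i))\<^sup>2 + 3 * (norm (- (a *\<^sub>R T x i)))\<^sup>2 + 3 * (norm (b *\<^sub>R x i))\<^sup>2"
        using sq_add3_le by metis
      then show ?thesis by (simp add: power_mult_distrib)
    qed
    have c: "Rq q T x \<in> l2H \<and> N2 (Rq q T x) \<le> 3 * N2 (T (T x)) + (3 * a\<^sup>2) * N2 (T x) + (3 * b\<^sup>2) * N2 x"
      by (rule comb3[OF ttx tx x]) (use pw in auto)
    have n1: "N2 (T x) \<le> K * N2 x" using K(2)[OF x] .
    have n2: "N2 (T (T x)) \<le> K * N2 (T x)" using K(2)[OF tx] .
    have n3: "N2 (T (T x)) \<le> K\<^sup>2 * N2 x"
      using n2 mult_left_mono[OF n1 K(1)] by (simp add: power2_eq_square mult.assoc)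
    have "3 * N2 (T (T x)) + (3 * a\<^sup>2) * N2 (T x) + (3 * b\<^sup>2) * N2 x
          \<le> 3 * (K\<^sup>2 * N2 x) + (3 * a\<^sup>2) * (K * N2 x) + (3 * b\<^sup>2) * N2 x"
      by (intro add_mono mult_left_mono n1 n3) auto
    also have "\<dots> = (3 * K\<^sup>2 + 3 * a\<^sup>2 * K + 3 * b\<^sup>2) * N2 x" by (simp add: algebra_simps)
    finally show ?thesis using c by linarith
  qed
  show ?thesis
  proof (rule BopsI[of _ "3 * K\<^sup>2 + 3 * a\<^sup>2 * K + 3 * b\<^sup>2"])
    show "x \<in> l2H \<Longrightarrow> Rq q T x \<in> l2H" for x by (rule conjunct1[OF main])
    show "x \<in> l2H \<Longrightarrow> N2 (Rq q T x) \<le> (3 * K\<^sup>2 + 3 * a\<^sup>2 * K + 3 * b\<^sup>2) * N2 x" for x by (rule conjunct2[OF main])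
    show "0 \<le> 3 * K\<^sup>2 + 3 * a\<^sup>2 * K + 3 * b\<^sup>2" using K(1) by simp
    show "x \<notin> l2H \<Longrightarrow> Rq q T x = (\<lambda>i. 0)" for x by (simp add: Rq_def)
    show "Rq q T (\<lambda>i. x i + y i) = (\<lambda>i. Rq q T x i + Rq q T y i)" if x: "x \<in> l2H" and y: "y \<in> l2H" for x y
    proof -
      have s: "(\<lambda>i. x i + y i) \<in> l2H" using add_l2H[OF x y] .
      have t1: "T (\<lambda>i. x i + y i) = (\<lambda>i. T x i + T y i)" using BopsD2[OF T x y] .
      have t2: "T (\<lambda>i. T x i + T y i) = (\<lambda>i. T (T x) i + T (T y) i)"
        using BopsD2[OF T BopsD1[OF T x] BopsD1[OF T y]] .
      show ?thesis unfolding R[OF s] R[OF x] R[OF y] t1 t2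
        by (rule ext) (simp add: algebra_simps scaleR_add_right)
    qed
    show "Rq q T (rscal x c) = rscal (Rq q T x) c" if x: "x \<in> l2H" for x c
    proof -
      have s: "rscal x c \<in> l2H" using rscal_l2H[OF x] .
      have t1: "T (rscal x c) = rscal (T x) c" using BopsD3[OF T x] .
      have t2: "T (rscal (T x) c) = rscal (T (T x)) c" using BopsD3[OF T BopsD1[OF T x]] .
      show ?thesis unfolding R[OF s] R[OF x] t1 t2
        by (rule ext) (simp add: rscal_def qmult_add_left qmult_diff_left qmult_scaleR_left)
    qed
  qed
qed

lemma Rq_cont:
  assumes T: "T \<in> Bops" and K: "K \<ge> 0" "\<And>x. x \<in> l2H \<Longrightarrow> N2 (T x) \<le> K * N2 x"
  shows "opdist (Rq p T) (Rq q T) \<le> sqrt (2 * (2 * qRe q - 2 * qRe p)\<^sup>2 * K + 2 * ((norm p)\<^sup>2 - (norm q)\<^sup>2)\<^sup>2)"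
  unfolding opdist_def
proof (rule opnorm_le)
  fix x assume x: "x \<in> l2H" and x1: "l2norm x \<le> 1"
  define al where "al = 2 * qRe q - 2 * qRe p"
  define be where "be = (norm p)\<^sup>2 - (norm q)\<^sup>2"
  have Nx: "N2 x \<le> 1" using x1 N2_nonneg[of x] by (simp add: l2norm_N2)
  have tx: "T x \<in> l2H" using BopsD1[OF T x] .
  have D: "(\<lambda>i. Rq p T x i - Rq q T x i) = (\<lambda>i. al *\<^sub>R T x i + be *\<^sub>R x i)"
    unfolding Rq_eq[OF x] al_def be_def by (rule ext) (simp add: algebra_simps)
  have pw: "(norm (al *\<^sub>R T x i + be *\<^sub>R x i))\<^sup>2 \<le> (2 * al\<^sup>2) * (norm (T x i))\<^sup>2 + (2 * be\<^sup>2) * (norm (x i))\<^sup>2" for i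
    using sq_add_le[of "al *\<^sub>R T x i" "be *\<^sub>R x i"] by (simp add: power_mult_distrib)
  have c: "N2 (\<lambda>i. al *\<^sub>R T x i + be *\<^sub>R x i) \<le> (2 * al\<^sup>2) * N2 (T x) + (2 * be\<^sup>2) * N2 x"
    using comb2[OF tx x _ _ pw] by simp
  also have "\<dots> \<le> (2 * al\<^sup>2) * (K * N2 x) + (2 * be\<^sup>2) * N2 x"
    by (intro add_mono mult_left_mono K(2)[OF x]) auto
  also have "\<dots> = (2 * al\<^sup>2 * K + 2 * be\<^sup>2) * N2 x" by (simp add: algebra_simps)
  also have "\<dots> \<le> (2 * al\<^sup>2 * K + 2 * be\<^sup>2) * 1"
    by (intro mult_left_mono Nx) (use K(1) in simp)
  finally have "N2 (\<lambda>i. al *\<^sub>R T x i + be *\<^sub>R x i) \<le> 2 * al\<^sup>2 * K + 2 * be\<^sup>2" by simp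
  then show "l2norm (\<lambda>i. Rq p T x i - Rq q T x i) \<le> sqrt (2 * (2 * qRe q - 2 * qRe p)\<^sup>2 * K + 2 * ((norm p)\<^sup>2 - (norm q)\<^sup>2)\<^sup>2)"
    unfolding D l2norm_N2 al_def be_def by simp
qed

definition shf :: "int \<Rightarrow> int" where "shf i = i + 1"
definition csh :: "int \<Rightarrow> real" where "csh i = (if i = -1 then 0 else 1)"

lemma Rshift_wop: "Rshift = wop shf csh"
proof (rule ext)
  fix x
  show "Rshift x = wop shf csh x"
  proof (cases "x \<in> l2H")
    case True
    show ?thesis unfolding wop_eq[OF True] using True by (auto simp: Rshift_def shf_def csh_def)
  qed (simp add: Rshift_def wop_def)
qed

lemma inj_shf: "inj shf" by (simp add: inj_def shf_def)
lemma csh_bound: "\<bar>csh i\<bar> \<le> 1" by (simp add: csh_def)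

lemma Rshift_Bops: "Rshift \<in> Bops"
  unfolding Rshift_wop by (rule wop_Bops[OF inj_shf csh_bound])

lemma Rshift_N2: "x \<in> l2H \<Longrightarrow> N2 (Rshift x) \<le> 1 * N2 x"
  unfolding Rshift_wop using wop_l2[OF inj_shf csh_bound] by simp

lemma Rshift_l2: "x \<in> l2H \<Longrightarrow> Rshift x \<in> l2H"
  using BopsD1[OF Rshift_Bops] .

definition qone :: quat where "qone = (\<chi> n. if n = 1 then 1 else 0)"

primrec qpow :: "quat \<Rightarrow> nat \<Rightarrow> quat" where
  "qpow q 0 = qone"
| "qpow q (Suc n) = qmult q (qpow q n)"

lemma norm_qone: "norm qone = 1"
proof -
  have "(norm qone)\<^sup>2 = 1" unfolding qnorm_sq by (simp add: qone_def)
  then have "norm qone = 1 \<or> norm qone = -1" by (simp add: power2_eq_1_iff)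
  then show ?thesis using norm_ge_zero[of qone] by linarith
qed

lemma qone_nz: "qone \<noteq> 0"
  using norm_qone by auto

lemma norm_qpow: "norm (qpow q n) = norm q ^ n"
  by (induction n) (simp_all add: norm_qone qmult_norm)

definition kvec :: "quat \<Rightarrow> int \<Rightarrow> quat" where
  "kvec q = (\<lambda>i. if 0 \<le> i then qpow q (nat i) else 0)"

lemma kvec_l2:
  assumes q: "norm q < 1"
  shows "kvec q \<in> l2H"
proof -
  let ?f = "\<lambda>i. (norm (kvec q i))\<^sup>2"
  have fi: "(?f \<circ> int) = (\<lambda>n. ((norm q)\<^sup>2) ^ n)"
    by (rule ext) (simp add: kvec_def norm_qpow power_mult[symmetric] mult.commute)
  have "summable (\<lambda>n. norm (((norm q)\<^sup>2) ^ n))"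
  proof -
    have "norm ((norm q)\<^sup>2) < 1" using q by (simp add: power_less_one_iff abs_square_less_1)
    then have "summable (\<lambda>n. (norm ((norm q)\<^sup>2)) ^ n)" by (intro summable_geometric) simp
    then show ?thesis by (simp add: norm_power)
  qed
  then have "(\<lambda>n. ((norm q)\<^sup>2) ^ n) summable_on UNIV" by (rule norm_summable_imp_summable_on)
  then have "(?f \<circ> int) summable_on UNIV" unfolding fi .
  then have r: "?f summable_on range int" using summable_on_reindex[of int UNIV ?f] by simp
  have "?f summable_on range int \<longleftrightarrow> ?f summable_on UNIV"
  proof (rule summable_on_cong_neutral)
    fix x assume "x \<in> UNIV - range int"
    then have "x < 0" by (metis Diff_iff nonneg_int_cases not_less rangeI)
    then show "?f x = 0" by (simp add: kvec_def)
  qed auto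
  then show ?thesis using r by (simp add: l2H_def)
qed

lemma kvec_step: "0 \<le> i \<Longrightarrow> kvec q (i + 1) = qmult q (kvec q i)"
  by (simp add: kvec_def nat_add_distrib)

lemma kvec_neg: "i < 0 \<Longrightarrow> kvec q i = 0"
  by (simp add: kvec_def)

lemma Rshift_eq: "x \<in> l2H \<Longrightarrow> Rshift x = (\<lambda>i. if i = -1 then 0 else x (i + 1))"
  by (simp add: Rshift_def)

lemma Rshift_zero: "Rshift (\<lambda>i. 0) = (\<lambda>i. 0)"
  by (simp add: Rshift_def)

lemma Rq_zero: "Rq q Rshift (\<lambda>i. 0) = (\<lambda>i. 0)"
  by (simp add: Rq_eq[OF zero_l2H] Rshift_zero)

lemma Rq_kvec:
  assumes q: "norm q < 1"
  shows "Rq q Rshift (kvec q) = (\<lambda>i. 0)"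
proof -
  let ?x = "kvec q"
  have x: "?x \<in> l2H" using kvec_l2[OF q] .
  have rx: "Rshift ?x = (\<lambda>i. if i = -1 then 0 else ?x (i + 1))" using Rshift_eq[OF x] .
  have rrx: "Rshift (Rshift ?x) = (\<lambda>i. if i = -1 then 0 else Rshift ?x (i + 1))"
    using Rshift_eq[OF Rshift_l2[OF x]] .
  show ?thesis
  proof (rule ext)
    fix i :: int
    have "Rshift (Rshift ?x) i - (2 * qRe q) *\<^sub>R Rshift ?x i + (norm q)\<^sup>2 *\<^sub>R ?x i = 0"
    proof (cases "0 \<le> i")
      case True
      have e1: "Rshift ?x i = qmult q (?x i)" using True by (simp add: rx kvec_step)
      have e3: "Rshift (Rshift ?x) i = Rshift ?x (i + 1)" by (subst rrx) (use True in simp)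
      have e5: "Rshift ?x (i + 1) = ?x (i + 1 + 1)" using True by (simp add: rx)
      have e6: "?x (i + 1 + 1) = qmult q (?x (i + 1))" by (rule kvec_step) (use True in simp)
      have e4: "Rshift ?x (i + 1) = qmult q (?x (i + 1))" using e5 e6 by simp
      have e2: "Rshift (Rshift ?x) i = qmult q (qmult q (?x i))"
        unfolding e3 e4 kvec_step[OF True] ..
      show ?thesis unfolding e1 e2 by (rule qmult_char)
    next
      case False
      have a: "?x i = 0" using False by (simp add: kvec_neg)
      have b: "Rshift ?x i = 0" using False by (simp add: rx kvec_neg)
      have c: "Rshift (Rshift ?x) i = 0" by (subst rrx) (use False in \<open>simp add: rx kvec_neg\<close>)
      show ?thesis by (simp add: a b c)
    qed
    then show "Rq q Rshift ?x i = 0" by (simp add: Rq_eq[OF x])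
  qed
qed

lemma small_in_spec:
  assumes q: "norm q < 1"
  shows "q \<in> S_spectrum Rshift"
proof -
  have "Rq q Rshift \<notin> Binv"
  proof
    assume "Rq q Rshift \<in> Binv"
    then obtain S where S: "S \<circ> Rq q Rshift = Iop" unfolding Binv_def by blast
    have "Iop (kvec q) = S (Rq q Rshift (kvec q))" using S by (metis comp_apply)
    also have "\<dots> = S (Rq q Rshift (\<lambda>i. 0))" by (simp add: Rq_kvec[OF q] Rq_zero)
    also have "\<dots> = Iop (\<lambda>i. 0)" using S by (metis comp_apply)
    finally have "kvec q = (\<lambda>i. 0)" using kvec_l2[OF q] zero_l2H by (simp add: Iop_def)
    then have "kvec q 0 = 0" by simp
    then show False using qone_nz by (simp add: kvec_def)
  qed
  then show ?thesis by (simp add: S_spectrum_def)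
qed

lemma zero_not_frontier: "0 \<notin> frontier (S_spectrum Rshift)"
proof -
  have "ball 0 1 \<subseteq> S_spectrum Rshift" using small_in_spec by (auto simp: dist_norm)
  then have "0 \<in> interior (S_spectrum Rshift)"
    by (meson centre_in_ball interior_maximal open_ball subsetD zero_less_one)
  then show ?thesis by (simp add: frontier_def)
qed

definition sge :: "int \<Rightarrow> int" where
  "sge i = (if i = -2 then 0 else if i = -1 then 1 else i + 2)"
definition tge :: "int \<Rightarrow> int" where
  "tge j = (if j = 0 then -2 else if j = 1 then -1 else j - 2)"
definition cge :: "real \<Rightarrow> int \<Rightarrow> real" where
  "cge e i = (if i = -2 \<or> i = -1 then e else 1)"
definition dge :: "real \<Rightarrow> int \<Rightarrow> real" where
  "dge e j = (if j = 0 \<or> j = 1 then 1 / e else 1)"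
definition pge :: "real \<Rightarrow> int \<Rightarrow> real" where
  "pge e i = (if i = -2 \<or> i = -1 then e else 0)"

lemma st_ge: "sge (tge j) = j" by (simp add: sge_def tge_def)
lemma ts_ge: "tge (sge i) = i" by (simp add: sge_def tge_def)
lemma inj_sge: "inj sge" by (metis injI ts_ge)
lemma inj_tge: "inj tge" by (metis injI st_ge)

lemma cge_bound: "e > 0 \<Longrightarrow> \<bar>cge e i\<bar> \<le> max e 1" by (simp add: cge_def)
lemma dge_bound: "e > 0 \<Longrightarrow> \<bar>dge e i\<bar> \<le> max (1 / e) 1" by (simp add: dge_def)
lemma pge_bound: "e > 0 \<Longrightarrow> \<bar>pge e i\<bar> \<le> e" by (simp add: pge_def)

lemma dc_ge: "e > 0 \<Longrightarrow> dge e j * cge e (tge j) = 1"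
  by (simp add: dge_def cge_def tge_def)
lemma cd_ge: "e > 0 \<Longrightarrow> cge e i * dge e (sge i) = 1"
  by (simp add: dge_def cge_def sge_def)

lemma pert_Binv:
  assumes e: "e > 0"
  shows "wop sge (cge e) \<in> Binv"
proof -
  have B1: "wop sge (cge e) \<in> Bops" by (rule wop_Bops[OF inj_sge cge_bound[OF e]])
  have B2: "wop tge (dge e) \<in> Bops" by (rule wop_Bops[OF inj_tge dge_bound[OF e]])
  have i1: "wop tge (dge e) \<circ> wop sge (cge e) = Iop"
    by (rule wop_inverse[OF BopsD1[OF B1] st_ge dc_ge[OF e]])
  have i2: "wop sge (cge e) \<circ> wop tge (dge e) = Iop"
  proof (rule wop_inverse[OF BopsD1[OF B2] ts_ge])
    show "cge e j * dge e (sge j) = 1" for j by (rule cd_ge[OF e])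
  qed
  show ?thesis unfolding Binv_def using B1 B2 i1 i2 by blast
qed

lemma Rq0_eq: "x \<in> l2H \<Longrightarrow> Rq 0 Rshift x = Rshift (Rshift x)"
  by (simp add: Rq_eq qRe_def)

lemma pert_diff:
  assumes x: "x \<in> l2H"
  shows "(\<lambda>i. wop sge (cge e) x i - Rq 0 Rshift x i) = wop sge (pge e) x"
proof -
  have rx: "Rshift x = (\<lambda>i. if i = -1 then 0 else x (i + 1))" using Rshift_eq[OF x] .
  have rrx: "Rshift (Rshift x) = (\<lambda>i. if i = -1 then 0 else Rshift x (i + 1))"
    using Rshift_eq[OF Rshift_l2[OF x]] .
  show ?thesis unfolding wop_eq[OF x] Rq0_eq[OF x]
  proof (rule ext)
    fix i :: int
    have "Rshift (Rshift x) i = (if i = -1 then 0 else if i = -2 then 0 else x (i + 2))"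
      by (subst rrx) (simp add: rx add.assoc)
    then show "cge e i *\<^sub>R x (sge i) - Rshift (Rshift x) i = pge e i *\<^sub>R x (sge i)"
      by (simp add: cge_def pge_def sge_def)
  qed
qed

lemma opdist_self: "opdist T T \<le> 0"
  unfolding opdist_def by (rule opnorm_le) (simp add: l2norm_N2 N2_zero)

lemma pert_close:
  assumes e: "e > 0"
  shows "opdist (wop sge (cge e)) (Rq 0 Rshift) \<le> e"
  unfolding opdist_def
proof (rule opnorm_le)
  fix x assume x: "x \<in> l2H" and x1: "l2norm x \<le> 1"
  have "N2 (wop sge (pge e) x) \<le> e\<^sup>2 * N2 x"
    by (rule conjunct2[OF wop_l2[OF inj_sge pge_bound[OF e] x]])
  then have "l2norm (wop sge (pge e) x) \<le> e * l2norm x"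
    by (rule N2_le_imp_l2norm[rotated]) (use e in simp)
  also have "\<dots> \<le> e * 1" using x1 e by (intro mult_left_mono) auto
  finally show "l2norm (\<lambda>i. wop sge (cge e) x i - Rq 0 Rshift x i) \<le> e"
    unfolding pert_diff[OF x] by simp
qed

lemma zero_in_boundary: "0 \<in> boundary_S_spectrum Rshift"
  unfolding boundary_S_spectrum_def mem_Collect_eq Bfrontier_def
proof (intro CollectI conjI allI impI)
  show RB: "Rq 0 Rshift \<in> Bops" by (rule Rq_Bops[OF Rshift_Bops])
  fix e :: real assume e: "e > 0"
  have "0 \<in> S_spectrum Rshift" by (rule small_in_spec) simp
  then have "Rq 0 Rshift \<notin> Binv" by (simp add: S_spectrum_def)
  moreover have "opdist (Rq 0 Rshift) (Rq 0 Rshift) < e" using opdist_self[of "Rq 0 Rshift"] e by linarith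
  ultimately show "\<exists>S\<in>Bops \<inter> (Bops - Binv). opdist S (Rq 0 Rshift) < e" using RB by blast
  have e2: "e / 2 > 0" using e by simp
  have P: "wop sge (cge (e / 2)) \<in> Binv" by (rule pert_Binv[OF e2])
  then have "wop sge (cge (e / 2)) \<in> Bops - (Bops - Binv)" by (simp add: Binv_def)
  moreover have "opdist (wop sge (cge (e / 2))) (Rq 0 Rshift) < e"
    using pert_close[OF e2] e by linarith
  ultimately show "\<exists>S\<in>Bops - (Bops - Binv). opdist S (Rq 0 Rshift) < e" by blast
qed

lemma frontier_sub: "frontier (S_spectrum Rshift) \<subseteq> boundary_S_spectrum Rshift"
proof
  fix q assume q: "q \<in> frontier (S_spectrum Rshift)"
  define f where "f = (\<lambda>p::quat. sqrt (2 * (2 * qRe q - 2 * qRe p)\<^sup>2 * 1 + 2 * ((norm p)\<^sup>2 - (norm q)\<^sup>2)\<^sup>2))"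
  have c1: "isCont (\<lambda>p::quat. p $ 1) q" by (rule isCont_vec_nth[OF continuous_ident])
  have cf: "isCont f q" unfolding f_def qRe_def by (intro continuous_intros c1)
  have f0: "f q = 0" by (simp add: f_def)
  have dist_le: "opdist (Rq p Rshift) (Rq q Rshift) \<le> f p" for p
    unfolding f_def by (rule Rq_cont[OF Rshift_Bops _ Rshift_N2]) simp
  have RB: "\<And>p. Rq p Rshift \<in> Bops" by (rule Rq_Bops[OF Rshift_Bops])
  show "q \<in> boundary_S_spectrum Rshift"
    unfolding boundary_S_spectrum_def mem_Collect_eq Bfrontier_def
  proof (intro CollectI conjI allI impI RB)
    fix e :: real assume e: "e > 0"
    obtain d where d: "d > 0" "\<And>p. dist p q < d \<Longrightarrow> dist (f p) (f q) < e"
      using cf e unfolding continuous_at_eps_delta by blast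
    have close: "opdist (Rq p Rshift) (Rq q Rshift) < e" if "dist q p < d" for p
    proof -
      have "dist (f p) 0 < e" using d(2)[of p] that f0 by (simp add: dist_commute)
      then have "f p < e" by simp
      then show ?thesis using dist_le[of p] by linarith
    qed
    obtain p1 where p1: "p1 \<in> S_spectrum Rshift" "dist q p1 < d"
      using q d(1) unfolding frontier_straddle by blast
    obtain p2 where p2: "p2 \<notin> S_spectrum Rshift" "dist q p2 < d"
      using q d(1) unfolding frontier_straddle by blast
    have "Rq p1 Rshift \<in> Bops \<inter> (Bops - Binv)" using p1(1) RB by (simp add: S_spectrum_def)
    then show "\<exists>S\<in>Bops \<inter> (Bops - Binv). opdist S (Rq q Rshift) < e" using close[OF p1(2)] by blast
    have "Rq p2 Rshift \<in> Bops - (Bops - Binv)" using p2(1) RB by (simp add: S_spectrum_def)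
    then show "\<exists>S\<in>Bops - (Bops - Binv). opdist S (Rq q Rshift) < e" using close[OF p2(2)] by blast
  qed
qed

theorem mainTheorem15:
  shows "frontier (S_spectrum Rshift) \<subset> boundary_S_spectrum Rshift"
  using frontier_sub zero_in_boundary zero_not_frontier by blast

end
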